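(* Let $m_1,m_2\in\mathbb{N}$ be relatively prime and $\alpha\in\mathbb{R}$. (i) If $m_1+m_2$ is odd, then the set $\mathrm{LS}_\alpha=\{\boldsymbol{\varrho}^{(\boldsymbol{m})}_\alpha(t_l):\ l\in\{0,\dots,4m_1m_2-1\}\}$, with $t_l=\frac{l\pi}{2m_1m_2}$, is exactly the union of all self-intersection points and all boundary points of the closed curve $\boldsymbol{\varrho}^{(\boldsymbol{m})}_\alpha$. It contains $2m_1m_2+1$ points: the center $(0,0)$, which is traversed $2m_2$ times in one period $2\pi$; $2(m_1-1)m_2$ ordinary double points distinct from $(0,0)$; and $2m_2$ points on the unit circle. (ii) If $m_1+m_2$ is even, then the curve $\boldsymbol{\varrho}^{(\boldsymbol{m})}_\alpha$ has $\frac12(m_1-1)m_2$ ordinary double points distinct from $(0,0)$ and $m_2$ points on the unit circle, and the center $(0,0)$ is traversed $m_2$ times in one (minimal) period $\pi$.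
   Context: For $\boldsymbol{m}=(m_1,m_2)\in\mathbb{N}^2$ and $\alpha\in\mathbb{R}$, the rhodonea curve is $\boldsymbol{\varrho}^{(\boldsymbol{m})}_\alpha(t)=\big(\cos(m_2t)\cos(m_1t-\alpha\pi),\ \cos(m_2t)\sin(m_1t-\alpha\pi)\big)$, $t\in\mathbb{R}$, with values in the unit disk $\mathbb{D}=\{x\in\mathbb{R}^2:|x|\le1\}$. For relatively prime $m_1,m_2$ its minimal period $P$ is $2\pi$ if $m_1+m_2$ is odd and $\pi$ if $m_1+m_2$ is even. A point $x$ of the curve is a self-intersection point if there are at least two distinct parameters $t\in[0,P)$ with $\boldsymbol{\varrho}^{(\boldsymbol{m})}_\alpha(t)=x$; it is an ordinary double point if there are exactly two such parameters; it is a boundary point if $|x|=1$. "Traversed $k$ times in one period" means there are exactly $k$ parameters $t\in[0,P)$ with $\boldsymbol{\varrho}^{(\boldsymbol{m})}_\alpha(t)=x$. *)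

theory Defs
  imports "HOL-Analysis.Analysis"
begin

definition rhodonea :: "nat \<Rightarrow> nat \<Rightarrow> real \<Rightarrow> real \<Rightarrow> real \<times> real" where
  "rhodonea m1 m2 \<alpha> t =
     (cos (real m2 * t) * cos (real m1 * t - \<alpha> * pi),
      cos (real m2 * t) * sin (real m1 * t - \<alpha> * pi))"

text \<open>Minimal period (for relatively prime m1, m2).\<close>
definition rho_period :: "nat \<Rightarrow> nat \<Rightarrow> real" where
  "rho_period m1 m2 = (if odd (m1 + m2) then 2 * pi else pi)"

definition rho_params :: "nat \<Rightarrow> nat \<Rightarrow> real \<Rightarrow> real \<times> real \<Rightarrow> real set" where
  "rho_params m1 m2 \<alpha> x = {t. 0 \<le> t \<and> t < rho_period m1 m2 \<and> rhodonea m1 m2 \<alpha> t = x}"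

definition self_intersection :: "nat \<Rightarrow> nat \<Rightarrow> real \<Rightarrow> real \<times> real \<Rightarrow> bool" where
  "self_intersection m1 m2 \<alpha> x \<longleftrightarrow>
     (\<exists>s t. s \<in> rho_params m1 m2 \<alpha> x \<and> t \<in> rho_params m1 m2 \<alpha> x \<and> s \<noteq> t)"

definition traversed :: "nat \<Rightarrow> nat \<Rightarrow> real \<Rightarrow> real \<times> real \<Rightarrow> nat \<Rightarrow> bool" where
  "traversed m1 m2 \<alpha> x k \<longleftrightarrow> finite (rho_params m1 m2 \<alpha> x) \<and> card (rho_params m1 m2 \<alpha> x) = k"

definition ordinary_double_point :: "nat \<Rightarrow> nat \<Rightarrow> real \<Rightarrow> real \<times> real \<Rightarrow> bool" where
  "ordinary_double_point m1 m2 \<alpha> x \<longleftrightarrow> traversed m1 m2 \<alpha> x 2"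

definition boundary_points :: "nat \<Rightarrow> nat \<Rightarrow> real \<Rightarrow> (real \<times> real) set" where
  "boundary_points m1 m2 \<alpha> = {x \<in> range (rhodonea m1 m2 \<alpha>). norm x = 1}"

definition LS :: "nat \<Rightarrow> nat \<Rightarrow> real \<Rightarrow> (real \<times> real) set" where
  "LS m1 m2 \<alpha> = (\<lambda>l. rhodonea m1 m2 \<alpha> (real l * pi / (2 * real m1 * real m2))) ` {0..<4*m1*m2}"

end

theory Submission
  imports Defs
begin


definition cc :: "nat \<Rightarrow> nat \<Rightarrow> real \<Rightarrow> complex" where
  "cc m1 m2 t = complex_of_real (cos (real m2 * t)) * cis (real m1 * t)"

lemma rho_as_cc: "rhodonea m1 m2 \<alpha> t = (Re (cc m1 m2 t * cis (- \<alpha> * pi)), Im (cc m1 m2 t * cis (- \<alpha> * pi)))"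
  unfolding rhodonea_def cc_def
  by (simp add: cis_mult[symmetric] cis.simps algebra_simps cos_diff sin_diff)

lemma rho_eq_iff: "rhodonea m1 m2 \<alpha> s = rhodonea m1 m2 \<alpha> t \<longleftrightarrow> cc m1 m2 s = cc m1 m2 t"
proof -
  have "rhodonea m1 m2 \<alpha> s = rhodonea m1 m2 \<alpha> t \<longleftrightarrow>
     cc m1 m2 s * cis (- \<alpha> * pi) = cc m1 m2 t * cis (- \<alpha> * pi)"
    unfolding rho_as_cc by (simp add: complex_eq_iff)
  also have "\<dots> \<longleftrightarrow> cc m1 m2 s = cc m1 m2 t" by simp
  finally show ?thesis .
qed

lemma rho_zero_iff: "rhodonea m1 m2 \<alpha> t = (0,0) \<longleftrightarrow> cos (real m2 * t) = 0"
proof -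
  have "cos (real m2 * t) * cos x = 0 \<and> cos (real m2 * t) * sin x = 0 \<longleftrightarrow> cos (real m2 * t) = 0" for x
    using sin_cos_squared_add[of x] by (auto simp: power2_eq_square)
  then show ?thesis unfolding rhodonea_def by simp
qed

lemma norm_rho: "norm (rhodonea m1 m2 \<alpha> t) = \<bar>cos (real m2 * t)\<bar>"
proof -
  have "(cos (real m2 * t) * cos x)\<^sup>2 + (cos (real m2 * t) * sin x)\<^sup>2 = (cos (real m2 * t))\<^sup>2" for x
  proof -
    have "(cos (real m2 * t) * cos x)\<^sup>2 + (cos (real m2 * t) * sin x)\<^sup>2 = (cos (real m2 * t))\<^sup>2 * ((sin x)\<^sup>2 + (cos x)\<^sup>2)"
      by algebra
    then show ?thesis by (simp only: sin_cos_squared_add mult_1_right)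
  qed
  then show ?thesis unfolding rhodonea_def by (simp add: norm_Pair)
qed


lemma cc_eq_parts: "cc m1 m2 s = cc m1 m2 t \<longleftrightarrow>
   cos (real m2 * s) * cos (real m1 * s) = cos (real m2 * t) * cos (real m1 * t) \<and>
   cos (real m2 * s) * sin (real m1 * s) = cos (real m2 * t) * sin (real m1 * t)"
  unfolding cc_def by (simp add: complex_eq_iff cis.simps)

locale rose =
  fixes m1 m2 :: nat
  assumes m1p: "m1 > 0" and m2p: "m2 > 0" and cop: "coprime m1 m2"

context rose
begin

lemma caseb:
  assumes "real m1 * x = of_int j * pi" "real m2 * x = of_int b * pi" "even (j + b)"
  shows "\<exists>e::int. x = of_int e * pi \<and> even ((int m1 + int m2) * e)"
proof -
  have "real m2 * (real m1 * x) = real m1 * (real m2 * x)" by simp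
  then have "of_int (int m2 * j) * pi = of_int (int m1 * b) * pi"
    using assms by simp
  then have "real_of_int (int m2 * j) = real_of_int (int m1 * b)" by simp
  then have eq: "int m2 * j = int m1 * b" by (simp only: of_int_eq_iff)
  have "coprime (int m1) (int m2)" using cop by simp
  moreover have "int m1 dvd int m2 * j" using eq by simp
  ultimately have "int m1 dvd j" by (simp add: coprime_dvd_mult_right_iff)
  then obtain e where je: "j = int m1 * e" by blast
  have "int m1 * b = int m1 * (int m2 * e)" using eq je by (metis mult.assoc mult.commute)
  then have be: "b = int m2 * e" using m1p by simp
  have "real m1 * x = real m1 * (of_int e * pi)" using assms(1) je by simp
  then have "x = of_int e * pi" using m1p by simp
  moreover have "(int m1 + int m2) * e = j + b" using je be by (simp add: algebra_simps)
  ultimately show ?thesis using assms(3) by metis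
qed

lemma EQ:
  assumes eq: "cc m1 m2 s = cc m1 m2 t" and nz: "cos (real m2 * t) \<noteq> 0"
  shows "(\<exists>e::int. s - t = of_int e * pi \<and> even ((int m1 + int m2) * e)) \<or>
         (\<exists>a j::int. even (a + j) \<and> real m2 * (s + t) = of_int a * pi \<and> real m1 * (s - t) = of_int j * pi)"
proof -
  define A where "A = cos (real m2 * s)"
  define B where "B = cos (real m2 * t)"
  define u where "u = real m1 * s"
  define v where "v = real m1 * t"
  have e1: "A * cos u = B * cos v" and e2: "A * sin u = B * sin v"
    using eq unfolding cc_eq_parts A_def B_def u_def v_def by auto
  have "A * sin (u - v) = (A * sin u) * cos v - (A * cos u) * sin v"
    by (simp add: sin_diff algebra_simps)
  also have "\<dots> = 0" using e1 e2 by (simp add: algebra_simps)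
  finally have s0: "A * sin (u - v) = 0" .
  have "A * cos (u - v) = (A * cos u) * cos v + (A * sin u) * sin v"
    by (simp add: cos_diff algebra_simps)
  also have "\<dots> = B * ((sin v)\<^sup>2 + (cos v)\<^sup>2)" using e1 e2 by algebra
  also have "\<dots> = B" by simp
  finally have c0: "A * cos (u - v) = B" .
  have "A \<noteq> 0" using c0 nz B_def by auto
  with s0 have "sin (u - v) = 0" by simp
  then obtain j :: int where j: "u - v = of_int j * pi" using sin_zero_iff_int2 by blast
  have sj: "sin (of_int j * pi) = 0" using sin_zero_iff_int2 by blast
  have "cos (real m2 * s + of_int j * pi) = A * cos (of_int j * pi)"
    by (simp add: cos_add sj A_def)
  also have "\<dots> = B" using c0 j by simp
  finally have "cos (real m2 * s + of_int j * pi) - cos (real m2 * t) = 0" by (simp add: B_def)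
  then have "sin ((real m2 * s + of_int j * pi + real m2 * t) / 2) = 0 \<or>
             sin ((real m2 * t - (real m2 * s + of_int j * pi)) / 2) = 0"
    unfolding cos_diff_cos by simp
  then show ?thesis
  proof
    assume "sin ((real m2 * s + of_int j * pi + real m2 * t) / 2) = 0"
    then obtain k :: int where k: "(real m2 * s + of_int j * pi + real m2 * t) / 2 = of_int k * pi"
      using sin_zero_iff_int2 by blast
    have "real m2 * (s + t) = of_int (2 * k - j) * pi" using k by (simp add: algebra_simps)
    moreover have "real m1 * (s - t) = of_int j * pi" using j by (simp add: u_def v_def algebra_simps)
    moreover have "even (2 * k - j + j)" by simp
    ultimately show ?thesis by blast
  next
    assume "sin ((real m2 * t - (real m2 * s + of_int j * pi)) / 2) = 0"
    then obtain k :: int where k: "(real m2 * t - (real m2 * s + of_int j * pi)) / 2 = of_int k * pi"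
      using sin_zero_iff_int2 by blast
    have h2: "real m2 * (s - t) = of_int (- 2 * k - j) * pi" using k by (simp add: algebra_simps)
    have h1: "real m1 * (s - t) = of_int j * pi" using j by (simp add: u_def v_def algebra_simps)
    have "even (j + (- 2 * k - j))" by simp
    from caseb[OF h1 h2 this] show ?thesis by blast
  qed
qed


lemma both_odd: "even (m1 + m2) \<Longrightarrow> odd m1 \<and> odd m2"
proof (rule ccontr)
  assume "even (m1 + m2)" "\<not> (odd m1 \<and> odd m2)"
  then have "2 dvd m1" "2 dvd m2" by auto
  with cop have "is_unit (2::nat)" using coprime_common_divisor by blast
  then show False by simp
qed

lemma cospi: "even (a + j) \<Longrightarrow> cos (of_int a * pi) * cos (of_int j * pi) = 1"
proof -
  assume ev: "even (a + j)"
  have sa: "sin (of_int a * pi) = 0" using sin_zero_iff_int2 by blast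
  have "cos (of_int a * pi) * cos (of_int j * pi) = cos (of_int a * pi + of_int j * pi)"
    by (simp add: cos_add sa)
  also obtain k where "a + j = 2 * k" using ev by blast
  then have "of_int a * pi + of_int j * pi = of_int k * 2 * pi"
    by (metis (mono_tags, opaque_lifting) distrib_right mult.assoc mult.commute of_int_add of_int_mult of_int_numeral)
  then have "cos (of_int a * pi + of_int j * pi) = 1" using cos_one_2pi_int by blast
  finally show ?thesis .
qed

lemma F2:
  assumes "real m2 * (s + t) = of_int a * pi" "real m1 * (s - t) = of_int j * pi" "even (a + j)"
  shows "cc m1 m2 s = cc m1 m2 t"
proof -
  have sa: "sin (of_int a * pi) = 0" "sin (of_int j * pi) = 0" using sin_zero_iff_int2 by blast+
  have "real m2 * s = of_int a * pi - real m2 * t" using assms(1) by (simp add: algebra_simps)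
  then have c1: "cos (real m2 * s) = cos (of_int a * pi) * cos (real m2 * t)"
    by (simp add: cos_diff sa)
  have "real m1 * s = real m1 * t + of_int j * pi" using assms(2) by (simp add: algebra_simps)
  then have c2: "cis (real m1 * s) = cis (real m1 * t) * complex_of_real (cos (of_int j * pi))"
    by (simp add: cis_mult[symmetric] cis.simps sa complex_eq_iff)
  have "cc m1 m2 s = complex_of_real (cos (of_int a * pi) * cos (of_int j * pi)) * cc m1 m2 t"
    unfolding cc_def c1 c2 by (simp add: algebra_simps)
  then show ?thesis using cospi[OF assms(3)] by simp
qed

lemma shift:
  assumes "even ((int m1 + int m2) * e)"
  shows "cc m1 m2 (t + of_int e * pi) = cc m1 m2 t"
proof -
  have sa: "sin (of_int (int m2 * e) * pi) = 0" "sin (of_int (int m1 * e) * pi) = 0"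
    using sin_zero_iff_int2 by blast+
  have sb: "sin (real m1 * real_of_int e * pi) = 0" using sa(2) by simp
  have "real m2 * (t + of_int e * pi) = real m2 * t + of_int (int m2 * e) * pi" by (simp add: algebra_simps)
  moreover have "cos (real m2 * t + of_int (int m2 * e) * pi) = cos (real m2 * t) * cos (of_int (int m2 * e) * pi)"
    unfolding cos_add sa by simp
  ultimately have c1: "cos (real m2 * (t + of_int e * pi)) = cos (real m2 * t) * cos (of_int (int m2 * e) * pi)"
    by simp
  have "real m1 * (t + of_int e * pi) = real m1 * t + of_int (int m1 * e) * pi" by (simp add: algebra_simps)
  moreover have "cis (real m1 * t + of_int (int m1 * e) * pi) = cis (real m1 * t) * complex_of_real (cos (of_int (int m1 * e) * pi))"
    unfolding cis_mult[symmetric] by (simp only: cis.simps sa complex_eq_iff) (simp add: sb)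
  ultimately have c2: "cis (real m1 * (t + of_int e * pi)) = cis (real m1 * t) * complex_of_real (cos (of_int (int m1 * e) * pi))"
    by simp
  have A: "cc m1 m2 (t + of_int e * pi) = complex_of_real (cos (of_int (int m1 * e) * pi) * cos (of_int (int m2 * e) * pi)) * cc m1 m2 t"
    unfolding cc_def c1 c2 by (simp add: algebra_simps)
  have "even (int m1 * e + int m2 * e)" using assms by (simp add: algebra_simps)
  then have B: "cos (of_int (int m1 * e) * pi) * cos (of_int (int m2 * e) * pi) = 1" by (rule cospi)
  show ?thesis by (simp only: A B of_real_1 mult_1_left)
qed

definition K :: nat where "K = (if odd (m1 + m2) then 2 * m2 else m2)"

lemma P_eq: "rho_period m1 m2 = real K * pi / real m2"
  using m2p unfolding rho_period_def K_def by auto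

lemma K_pos: "K > 0" using m2p unfolding K_def by auto

lemma same_period:
  assumes "0 \<le> s" "s < rho_period m1 m2" "0 \<le> t" "t < rho_period m1 m2"
    "s - t = of_int e * pi" "even ((int m1 + int m2) * e)"
  shows "s = t"
proof (cases "odd (m1 + m2)")
  case True
  then have "odd (int m1 + int m2)" by simp
  then have ev: "even e" using assms(6) by simp
  have P2: "rho_period m1 m2 = 2 * pi" using True unfolding rho_period_def by simp
  have "of_int e * pi < 2 * pi" "(- 2) * pi < of_int e * pi"
    using assms(1-5) P2 by linarith+
  then have "of_int e < (2::real)" "-2 < (of_int e::real)"
    by (metis mult_less_cancel_right_pos pi_gt_zero)+
  then have "e < 2" "-2 < e" by linarith+
  with ev have "e = 0" by presburger
  then show ?thesis using assms by simp
next
  case False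
  have P1: "rho_period m1 m2 = pi" using False unfolding rho_period_def by simp
  have "of_int e * pi < 1 * pi" "(- 1) * pi < of_int e * pi"
    using assms(1-5) P1 by linarith+
  then have "of_int e < (1::real)" "-1 < (of_int e::real)"
    by (metis mult_less_cancel_right_pos pi_gt_zero)+
  then have "e = 0" by linarith
  then show ?thesis using assms by simp
qed

lemma reduce:
  "\<exists>t'. 0 \<le> t' \<and> t' < rho_period m1 m2 \<and> cc m1 m2 t' = cc m1 m2 t"
proof -
  define d :: int where "d = (if odd (m1 + m2) then 2 else 1)"
  have P: "rho_period m1 m2 = of_int d * pi" unfolding rho_period_def d_def by auto
  have Ppos: "rho_period m1 m2 > 0" unfolding P d_def by auto
  define n where "n = floor (t / rho_period m1 m2)"
  have "of_int n \<le> t / rho_period m1 m2" "t / rho_period m1 m2 < of_int n + 1"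
    unfolding n_def by linarith+
  then have b: "of_int n * rho_period m1 m2 \<le> t" "t < (of_int n + 1) * rho_period m1 m2"
    using Ppos by (simp_all add: field_simps)
  define t' where "t' = t + of_int (- n * d) * pi"
  have "t' = t - of_int n * rho_period m1 m2" unfolding t'_def P by (simp add: algebra_simps)
  then have "0 \<le> t'" "t' < rho_period m1 m2" using b by (auto simp: algebra_simps)
  moreover have "even ((int m1 + int m2) * (- n * d))"
    using both_odd unfolding d_def by auto
  then have "cc m1 m2 t' = cc m1 m2 t" unfolding t'_def by (rule shift)
  ultimately show ?thesis by blast
qed


lemma reduce':
  "\<exists>e::int. even ((int m1 + int m2) * e) \<and> 0 \<le> t + of_int e * pi \<and> t + of_int e * pi < rho_period m1 m2"
proof -
  define d :: int where "d = (if odd (m1 + m2) then 2 else 1)"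
  have P: "rho_period m1 m2 = of_int d * pi" unfolding rho_period_def d_def by auto
  have Ppos: "rho_period m1 m2 > 0" unfolding P d_def by auto
  define n where "n = floor (t / rho_period m1 m2)"
  have "of_int n \<le> t / rho_period m1 m2" "t / rho_period m1 m2 < of_int n + 1"
    unfolding n_def by linarith+
  then have b: "of_int n * rho_period m1 m2 \<le> t" "t < (of_int n + 1) * rho_period m1 m2"
    using Ppos by (simp_all add: field_simps)
  have "t + of_int (- n * d) * pi = t - of_int n * rho_period m1 m2" unfolding P by (simp add: algebra_simps)
  then have "0 \<le> t + of_int (- n * d) * pi" "t + of_int (- n * d) * pi < rho_period m1 m2"
    using b by (auto simp: algebra_simps)
  moreover have "even ((int m1 + int m2) * (- n * d))"
    using both_odd unfolding d_def by auto
  ultimately show ?thesis by blast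
qed

lemma case1:
  assumes "0 \<le> s" "s < rho_period m1 m2" "0 \<le> t" "t < rho_period m1 m2" "s \<noteq> t"
    "cc m1 m2 s = cc m1 m2 t" "cos (real m2 * t) \<noteq> 0"
  shows "\<exists>a j::int. even (a + j) \<and> real m2 * (s + t) = of_int a * pi \<and> real m1 * (s - t) = of_int j * pi"
  using EQ[OF assms(6,7)] same_period[OF assms(1-4)] assms(5) by auto

lemma partner_unique:
  assumes "0 \<le> s1" "s1 < rho_period m1 m2" "0 \<le> s2" "s2 < rho_period m1 m2"
    "0 \<le> t" "t < rho_period m1 m2" "s1 \<noteq> t" "s2 \<noteq> t"
    "cc m1 m2 s1 = cc m1 m2 t" "cc m1 m2 s2 = cc m1 m2 t" "cos (real m2 * t) \<noteq> 0"
  shows "s1 = s2"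
proof -
  obtain a1 j1 where 1: "even (a1 + j1)" "real m2 * (s1 + t) = of_int a1 * pi" "real m1 * (s1 - t) = of_int j1 * pi"
    using case1[OF assms(1,2,5,6,7,9,11)] by blast
  obtain a2 j2 where 2: "even (a2 + j2)" "real m2 * (s2 + t) = of_int a2 * pi" "real m1 * (s2 - t) = of_int j2 * pi"
    using case1[OF assms(3,4,5,6,8,10,11)] by blast
  have h1: "real m1 * (s1 - s2) = of_int (j1 - j2) * pi" using 1 2 by (simp add: algebra_simps)
  have h2: "real m2 * (s1 - s2) = of_int (a1 - a2) * pi" using 1 2 by (simp add: algebra_simps)
  have "even (j1 - j2 + (a1 - a2))" using 1(1) 2(1) by presburger
  from caseb[OF h1 h2 this] obtain e where "s1 - s2 = of_int e * pi" "even ((int m1 + int m2) * e)" by blast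
  then show ?thesis using same_period[OF assms(1-4)] by blast
qed

lemma not_boundary:
  assumes "0 \<le> s" "s < rho_period m1 m2" "0 \<le> t" "t < rho_period m1 m2" "s \<noteq> t"
    "cc m1 m2 s = cc m1 m2 t" "cos (real m2 * t) \<noteq> 0"
  shows "sin (real m2 * t) \<noteq> 0"
proof
  assume "sin (real m2 * t) = 0"
  then obtain k :: int where k: "real m2 * t = of_int k * pi" using sin_zero_iff_int2 by blast
  obtain a j where 1: "even (a + j)" "real m2 * (s + t) = of_int a * pi" "real m1 * (s - t) = of_int j * pi"
    using case1[OF assms] by blast
  have h2: "real m2 * (s - t) = of_int (a - 2 * k) * pi" using 1 k by (simp add: algebra_simps)
  have "even (j + (a - 2 * k))" using 1(1) by presburger
  from caseb[OF 1(3) h2 this] obtain e where "s - t = of_int e * pi" "even ((int m1 + int m2) * e)" by blast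
  then have "s = t" using same_period[OF assms(1-4)] by blast
  then show False using assms(5) by simp
qed

lemma lattice:
  assumes "0 \<le> s" "s < rho_period m1 m2" "0 \<le> t" "t < rho_period m1 m2" "s \<noteq> t"
    "cc m1 m2 s = cc m1 m2 t" "cos (real m2 * t) \<noteq> 0"
  shows "\<exists>a j::int. even (a + j) \<and> real (2 * m1 * m2) * t = of_int (int m1 * a - int m2 * j) * pi"
proof -
  obtain a j where 1: "even (a + j)" "real m2 * (s + t) = of_int a * pi" "real m1 * (s - t) = of_int j * pi"
    using case1[OF assms] by blast
  have "real (2 * m1 * m2) * t = real m1 * (real m2 * (s + t)) - real m2 * (real m1 * (s - t))"
    by (simp add: algebra_simps)
  also have "\<dots> = of_int (int m1 * a - int m2 * j) * pi" using 1 by (simp add: algebra_simps)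
  finally show ?thesis using 1 by blast
qed

lemma partner_exists:
  assumes "0 \<le> t" "t < rho_period m1 m2" "sin (real m2 * t) \<noteq> 0"
    "even (a + j)" "real (2 * m1 * m2) * t = of_int (int m1 * a - int m2 * j) * pi"
  shows "\<exists>s. 0 \<le> s \<and> s < rho_period m1 m2 \<and> s \<noteq> t \<and> cc m1 m2 s = cc m1 m2 t"
proof -
  define s0 where "s0 = t + of_int j * pi / real m1"
  have h1: "real m1 * (s0 - t) = of_int j * pi" unfolding s0_def using m1p by simp
  have "real m1 * (real m2 * (s0 + t)) = real (2 * m1 * m2) * t + real m2 * (real m1 * (s0 - t))"
    by (simp add: algebra_simps)
  also have "\<dots> = real m1 * (of_int a * pi)" using assms(5) h1 by (simp add: algebra_simps)
  finally have h2: "real m2 * (s0 + t) = of_int a * pi" using m1p by simp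
  have c0: "cc m1 m2 s0 = cc m1 m2 t" by (rule F2[OF h2 h1 assms(4)])
  obtain e where e: "even ((int m1 + int m2) * e)" "0 \<le> s0 + of_int e * pi" "s0 + of_int e * pi < rho_period m1 m2"
    using reduce' by blast
  have c1: "cc m1 m2 (s0 + of_int e * pi) = cc m1 m2 t" using shift[OF e(1)] c0 by simp
  have "s0 + of_int e * pi \<noteq> t"
  proof
    assume st: "s0 + of_int e * pi = t"
    then have dt: "s0 - t = - of_int e * pi" by simp
    then have "real m1 * (s0 - t) = real m1 * (- of_int e * pi)" by simp
    then have "of_int j * pi = of_int (- int m1 * e) * pi" using h1 by simp
    then have "of_int j = (of_int (- int m1 * e) :: real)" using pi_neq_zero by (metis mult_cancel_right)
    then have je: "j = - int m1 * e" by (simp only: of_int_eq_iff)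
    have "real m2 * (2 * t) = real m2 * (s0 + t) - real m2 * (s0 - t)" by (simp add: algebra_simps)
    also have "\<dots> = of_int a * pi - real m2 * (- of_int e * pi)" by (simp only: h2 dt)
    also have "\<dots> = of_int (a + int m2 * e) * pi" by (simp add: algebra_simps)
    finally have tt: "real m2 * (2 * t) = of_int (a + int m2 * e) * pi" .
    have "even (a + int m2 * e)"
    proof -
      have "a + int m2 * e = (a + j) + (int m1 + int m2) * e" using je by (simp add: algebra_simps)
      then show ?thesis using assms(4) e(1) by simp
    qed
    then obtain k where "a + int m2 * e = 2 * k" by blast
    then have "real m2 * t = of_int k * pi" using tt by (simp add: algebra_simps)
    then have "sin (real m2 * t) = 0" using sin_zero_iff_int2 by blast
    then show False using assms(3) by simp
  qed
  then show ?thesis using c1 e by blast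
qed


end

context rose begin

lemma zero_params:
  "{t. 0 \<le> t \<and> t < rho_period m1 m2 \<and> cos (real m2 * t) = 0} =
   (\<lambda>k. real (2 * k + 1) * pi / real (2 * m2)) ` {0..<K}"
proof (intro equalityI subsetI)
  fix t assume "t \<in> {t. 0 \<le> t \<and> t < rho_period m1 m2 \<and> cos (real m2 * t) = 0}"
  then have t: "0 \<le> t" "t < real K * pi / real m2" "cos (real m2 * t) = 0" using P_eq by auto
  then obtain i where i: "odd i" "real m2 * t = of_int i * (pi / 2)" using cos_zero_iff_int by blast
  have "0 \<le> real m2 * t" using t m2p by simp
  then have "0 \<le> of_int i * (pi/2)" using i by simp
  then have "0 \<le> (of_int i :: real)" by (simp add: zero_le_mult_iff) (use pi_gt_zero in auto)
  then have i0: "0 \<le> i" by simp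
  have "real m2 * t < real K * pi" using t(2) m2p by (simp add: field_simps)
  then have "of_int i * (pi/2) < of_int (2 * int K) * (pi / 2)" using i by simp
  then have iK: "i < 2 * int K" by (metis mult_less_cancel_right_pos pi_half_gt_zero of_int_less_iff)
  obtain k where k: "i = 2 * k + 1" using i(1) by (metis oddE)
  have k0: "0 \<le> k" using i0 k by simp
  have r: "real (2 * nat k + 1) = of_int i" using k k0 by simp
  have "t = (real m2 * t) / real m2" using m2p by simp
  also have "\<dots> = of_int i * (pi / 2) / real m2" by (simp only: i(2))
  also have "\<dots> = real (2 * nat k + 1) * pi / real (2 * m2)" unfolding r by simp
  finally have "t = real (2 * nat k + 1) * pi / real (2 * m2)" .
  moreover have "nat k \<in> {0..<K}" using iK k k0 by simp
  ultimately show "t \<in> (\<lambda>k. real (2 * k + 1) * pi / real (2 * m2)) ` {0..<K}" by blast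
next
  fix t assume "t \<in> (\<lambda>k. real (2 * k + 1) * pi / real (2 * m2)) ` {0..<K}"
  then obtain k where k: "k < K" "t = real (2 * k + 1) * pi / real (2 * m2)" by auto
  have "real m2 * t = of_int (2 * int k + 1) * (pi / 2)" using k m2p by (simp add: field_simps)
  moreover have "odd (2 * int k + 1)" by simp
  ultimately have "cos (real m2 * t) = 0" unfolding cos_zero_iff_int by blast
  moreover have "0 \<le> t" using k by simp
  moreover have "t < real K * pi / real m2"
  proof -
    have "real (2 * k + 1) < real (2 * K)" using k by simp
    then have "real (2 * k + 1) * pi < real (2 * K) * pi" by simp
    then show ?thesis using k m2p by (simp add: field_simps)
  qed
  ultimately show "t \<in> {t. 0 \<le> t \<and> t < rho_period m1 m2 \<and> cos (real m2 * t) = 0}"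
    using P_eq by simp
qed

lemma traversed_zero: "traversed m1 m2 \<alpha> (0,0) K"
proof -
  have "rho_params m1 m2 \<alpha> (0,0) = (\<lambda>k. real (2 * k + 1) * pi / real (2 * m2)) ` {0..<K}"
    unfolding rho_params_def rho_zero_iff zero_params[symmetric] by simp
  moreover have "inj_on (\<lambda>k. real (2 * k + 1) * pi / real (2 * m2)) {0..<K}"
    using m2p by (auto simp: inj_on_def field_simps)
  ultimately show ?thesis unfolding traversed_def by (simp add: card_image)
qed

lemma bparams:
  "{t. 0 \<le> t \<and> t < rho_period m1 m2 \<and> sin (real m2 * t) = 0} =
   (\<lambda>k. real k * pi / real m2) ` {0..<K}"
proof (intro equalityI subsetI)
  fix t assume "t \<in> {t. 0 \<le> t \<and> t < rho_period m1 m2 \<and> sin (real m2 * t) = 0}"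
  then have t: "0 \<le> t" "t < real K * pi / real m2" "sin (real m2 * t) = 0" using P_eq by auto
  then obtain i :: int where i: "real m2 * t = of_int i * pi" using sin_zero_iff_int2 by blast
  have "0 \<le> real m2 * t" using t m2p by simp
  then have "0 \<le> of_int i * pi" using i by simp
  then have "0 \<le> (of_int i :: real)" by (simp add: zero_le_mult_iff) (use pi_gt_zero in auto)
  then have i0: "0 \<le> i" by simp
  have "real m2 * t < real K * pi" using t(2) m2p by (simp add: field_simps)
  then have "of_int i * pi < of_int (int K) * pi" using i by simp
  then have iK: "i < int K" by (metis mult_less_cancel_right_pos pi_gt_zero of_int_less_iff)
  have "t = real (nat i) * pi / real m2"
    using i i0 m2p by (simp add: field_simps)
  moreover have "nat i \<in> {0..<K}" using iK i0 by simp
  ultimately show "t \<in> (\<lambda>k. real k * pi / real m2) ` {0..<K}" by blast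
next
  fix t assume "t \<in> (\<lambda>k. real k * pi / real m2) ` {0..<K}"
  then obtain k where k: "k < K" "t = real k * pi / real m2" by auto
  have "real m2 * t = of_int (int k) * pi" using k m2p by (simp add: field_simps)
  then have "sin (real m2 * t) = 0" using sin_zero_iff_int2 by blast
  moreover have "0 \<le> t" using k by simp
  moreover have "t < real K * pi / real m2"
    using k m2p by (simp add: field_simps)
  ultimately show "t \<in> {t. 0 \<le> t \<and> t < rho_period m1 m2 \<and> sin (real m2 * t) = 0}"
    using P_eq by simp
qed

lemma sin0_cos: "sin (x::real) = 0 \<Longrightarrow> cos x \<noteq> 0"
  using sin_cos_squared_add[of x] by auto

lemma boundary_eq:
  "boundary_points m1 m2 \<alpha> = (\<lambda>k. rhodonea m1 m2 \<alpha> (real k * pi / real m2)) ` {0..<K}"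
proof (intro equalityI subsetI)
  fix x assume "x \<in> boundary_points m1 m2 \<alpha>"
  then obtain t where t: "x = rhodonea m1 m2 \<alpha> t" "\<bar>cos (real m2 * t)\<bar> = 1"
    unfolding boundary_points_def by (auto simp: norm_rho)
  obtain e where e: "even ((int m1 + int m2) * e)" "0 \<le> t + of_int e * pi" "t + of_int e * pi < rho_period m1 m2"
    using reduce' by blast
  define t' where "t' = t + of_int e * pi"
  have x: "x = rhodonea m1 m2 \<alpha> t'" unfolding t'_def t(1) rho_eq_iff using shift[OF e(1)] by simp
  have "\<bar>cos (real m2 * t')\<bar> = 1" using norm_rho t x by metis
  then have "(cos (real m2 * t'))\<^sup>2 = 1" by (metis power2_abs power_one)
  then have "(sin (real m2 * t'))\<^sup>2 = 0" using sin_cos_squared_add[of "real m2 * t'"] by linarith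
  then have "sin (real m2 * t') = 0" by simp
  then have "t' \<in> (\<lambda>k. real k * pi / real m2) ` {0..<K}"
    using bparams e(2,3) unfolding t'_def by blast
  then show "x \<in> (\<lambda>k. rhodonea m1 m2 \<alpha> (real k * pi / real m2)) ` {0..<K}" using x by auto
next
  fix x assume "x \<in> (\<lambda>k. rhodonea m1 m2 \<alpha> (real k * pi / real m2)) ` {0..<K}"
  then obtain k where k: "k < K" "x = rhodonea m1 m2 \<alpha> (real k * pi / real m2)" by auto
  have "real m2 * (real k * pi / real m2) = of_int (int k) * pi" using m2p by simp
  then have "sin (real m2 * (real k * pi / real m2)) = 0" using sin_zero_iff_int2 by blast
  have "\<bar>cos (real m2 * (real k * pi / real m2))\<bar> = 1" using m2p by simp
  then show "x \<in> boundary_points m1 m2 \<alpha>" unfolding boundary_points_def using k norm_rho by auto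
qed

lemma card_boundary: "finite (boundary_points m1 m2 \<alpha>) \<and> card (boundary_points m1 m2 \<alpha>) = K"
proof -
  have "inj_on (\<lambda>k. rhodonea m1 m2 \<alpha> (real k * pi / real m2)) {0..<K}"
  proof (rule inj_onI, rule ccontr)
    fix k k' assume kk: "k \<in> {0..<K}" "k' \<in> {0..<K}"
      "rhodonea m1 m2 \<alpha> (real k * pi / real m2) = rhodonea m1 m2 \<alpha> (real k' * pi / real m2)" "k \<noteq> k'"
    let ?s = "real k * pi / real m2" and ?t = "real k' * pi / real m2"
    have ins: "0 \<le> ?s \<and> ?s < rho_period m1 m2 \<and> sin (real m2 * ?s) = 0"
      using bparams kk(1) by blast
    have int: "0 \<le> ?t \<and> ?t < rho_period m1 m2 \<and> sin (real m2 * ?t) = 0"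
      using bparams kk(2) by blast
    have "?s \<noteq> ?t" using kk(4) m2p by (simp add: field_simps)
    moreover have "cc m1 m2 ?s = cc m1 m2 ?t" using kk(3) rho_eq_iff by blast
    ultimately have "sin (real m2 * ?t) \<noteq> 0"
      using not_boundary ins int sin0_cos by blast
    then show False using int by simp
  qed
  then show ?thesis using boundary_eq by (simp add: card_image)
qed

end

context rose begin

lemma good_l1:
  assumes "even (a + j)" "l = int m1 * a - int m2 * j" "even (m1 + m2)"
  shows "even l"
proof -
  have "odd m1" "odd m2" using both_odd assms(3) by auto
  then obtain p q where pq: "m1 = 2 * p + 1" "m2 = 2 * q + 1" by (meson oddE)
  have "l = 2 * (int p * a - int q * j - j) + (a + j)" using assms(2) unfolding pq by (simp add: algebra_simps)
  then show ?thesis using assms(1) by simp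
qed

lemma good_l2:
  assumes h: "odd (m1 + m2) \<or> even l"
  shows "\<exists>a j::int. even (a + j) \<and> l = int m1 * a - int m2 * j"
proof -
  have "gcd (int m1) (int m2) = 1" using cop by simp
  then obtain u v where uv: "u * int m1 + v * int m2 = 1" using bezout_int[of "int m1" "int m2"] by auto
  define a0 where "a0 = l * u"
  define j0 where "j0 = - l * v"
  have "int m1 * a0 - int m2 * j0 = l * (u * int m1 + v * int m2)"
    unfolding a0_def j0_def by (simp add: algebra_simps)
  then have l0: "l = int m1 * a0 - int m2 * j0" using uv by simp
  show ?thesis
  proof (cases "even (a0 + j0)")
    case True then show ?thesis using l0 by blast
  next
    case False
    show ?thesis
    proof (cases "odd (m1 + m2)")
      case True
      have "l = int m1 * (a0 + int m2) - int m2 * (j0 + int m1)" using l0 by (simp add: algebra_simps)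
      moreover have "even (a0 + int m2 + (j0 + int m1))"
      proof -
        have o1: "odd (int (m1 + m2))" using True by simp
        have e: "a0 + int m2 + (j0 + int m1) = (a0 + j0) + int (m1 + m2)" by simp
        have gen: "\<And>x y::int. odd x \<Longrightarrow> odd y \<Longrightarrow> even (x + y)" by simp
        show ?thesis unfolding e by (rule gen) (use False o1 in auto)
      qed
      ultimately show ?thesis by blast
    next
      case F2: False
      then have "even (m1 + m2)" by simp
      then have oo: "odd m1 \<and> odd m2" by (rule both_odd)
      then obtain p q where pq: "m1 = 2 * p + 1" "m2 = 2 * q + 1" by (meson oddE)
      have el: "even l" using h F2 by simp
      have e: "a0 + j0 = l - 2 * (int p * a0 - int q * j0 - j0)" using l0 unfolding pq by (simp add: algebra_simps)
      have "even (a0 + j0)" by (subst e) (simp add: el)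
      then show ?thesis using False by simp
    qed
  qed
qed

lemma good_l: "(\<exists>a j::int. even (a + j) \<and> l = int m1 * a - int m2 * j) \<longleftrightarrow> (odd (m1 + m2) \<or> even l)"
  using good_l1 good_l2 by blast


lemma lat_m2: "real (2 * m1 * m2) * t = of_int l * pi \<Longrightarrow> real m2 * t = of_int l * pi / real (2 * m1)"
  using m1p by (simp add: field_simps)

lemma lat_sin:
  assumes "real (2 * m1 * m2) * t = of_int l * pi"
  shows "sin (real m2 * t) = 0 \<longleftrightarrow> l mod (2 * int m1) = 0"
proof -
  have e: "real m2 * t = of_int l * pi / real (2 * m1)" using lat_m2[OF assms] .
  have "sin (real m2 * t) = 0 \<longleftrightarrow> (\<exists>i::int. of_int l * pi / real (2 * m1) = of_int i * pi)"
    unfolding e sin_zero_iff_int2 ..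
  also have "\<dots> \<longleftrightarrow> (\<exists>i::int. l = 2 * int m1 * i)"
  proof -
    have "of_int l * pi / real (2 * m1) = of_int i * pi \<longleftrightarrow> l = 2 * int m1 * i" for i
    proof -
      have "of_int l * pi / real (2 * m1) = of_int i * pi \<longleftrightarrow> of_int l * pi = of_int (2 * int m1 * i) * pi"
        using m1p by (simp add: field_simps)
      also have "\<dots> \<longleftrightarrow> l = 2 * int m1 * i" by (simp only: mult_cancel_right pi_neq_zero of_int_eq_iff simp_thms)
      finally show ?thesis .
    qed
    then show ?thesis by simp
  qed
  also have "\<dots> \<longleftrightarrow> l mod (2 * int m1) = 0" by (auto simp: dvd_def mod_eq_0_iff_dvd)
  finally show ?thesis .
qed

lemma lat_cos:
  assumes "real (2 * m1 * m2) * t = of_int l * pi"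
  shows "cos (real m2 * t) = 0 \<longleftrightarrow> l mod (2 * int m1) = int m1"
proof -
  have e: "real m2 * t = of_int l * pi / real (2 * m1)" using lat_m2[OF assms] .
  have "cos (real m2 * t) = 0 \<longleftrightarrow> (\<exists>i::int. odd i \<and> of_int l * pi / real (2 * m1) = of_int i * (pi / 2))"
    unfolding e cos_zero_iff_int ..
  also have "\<dots> \<longleftrightarrow> (\<exists>i::int. odd i \<and> l = int m1 * i)"
  proof -
    have "of_int l * pi / real (2 * m1) = of_int i * (pi / 2) \<longleftrightarrow> l = int m1 * i" for i
    proof -
      have "of_int l * pi / real (2 * m1) = of_int i * (pi / 2) \<longleftrightarrow> of_int l * pi = of_int (int m1 * i) * pi"
        using m1p by (simp add: field_simps)
      also have "\<dots> \<longleftrightarrow> l = int m1 * i" by (simp only: mult_cancel_right pi_neq_zero of_int_eq_iff simp_thms)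
      finally show ?thesis .
    qed
    then show ?thesis by simp
  qed
  also have "\<dots> \<longleftrightarrow> l mod (2 * int m1) = int m1"
  proof
    assume "\<exists>i::int. odd i \<and> l = int m1 * i"
    then obtain k where "l = int m1 * (2 * k + 1)" by (metis oddE)
    then have "l = int m1 + (2 * int m1) * k" by (simp add: algebra_simps)
    then have "l mod (2 * int m1) = int m1 mod (2 * int m1)" by simp
    also have "\<dots> = int m1" using m1p by simp
    finally show "l mod (2 * int m1) = int m1" .
  next
    assume h: "l mod (2 * int m1) = int m1"
    have "l = (2 * int m1) * (l div (2 * int m1)) + l mod (2 * int m1)" by simp
    then have "l = int m1 * (2 * (l div (2 * int m1)) + 1)" using h by (simp add: algebra_simps)
    then show "\<exists>i::int. odd i \<and> l = int m1 * i" by (intro exI[of _ "2 * (l div (2 * int m1)) + 1"]) simp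
  qed
  finally show ?thesis .
qed

lemma MP: "real (2 * m1 * m2) * rho_period m1 m2 = of_int (2 * int m1 * int K) * pi"
proof -
  have "real (2 * m1 * m2) * rho_period m1 m2 = (2 * real m1 * real K * pi) * (real m2 / real m2)"
    unfolding P_eq by simp
  also have "\<dots> = of_int (2 * int m1 * int K) * pi" using m2p by simp
  finally show ?thesis .
qed

lemma lat_range:
  assumes "real (2 * m1 * m2) * t = of_int l * pi"
  shows "(0 \<le> t \<and> t < rho_period m1 m2) \<longleftrightarrow> (0 \<le> l \<and> l < 2 * int m1 * int K)"
proof -
  have Mp: "real (2 * m1 * m2) > 0" using m1p m2p by simp
  have "0 \<le> t \<longleftrightarrow> real (2 * m1 * m2) * 0 \<le> real (2 * m1 * m2) * t"
    by (simp only: mult_le_cancel_left_pos[OF Mp])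
  also have "\<dots> \<longleftrightarrow> 0 * pi \<le> of_int l * pi" unfolding assms by simp
  also have "\<dots> \<longleftrightarrow> 0 \<le> l" using mult_le_cancel_right_pos[OF pi_gt_zero, of 0 "of_int l"] by simp
  finally have 1: "0 \<le> t \<longleftrightarrow> 0 \<le> l" .
  have "t < rho_period m1 m2 \<longleftrightarrow> real (2 * m1 * m2) * t < real (2 * m1 * m2) * rho_period m1 m2"
    by (simp only: mult_less_cancel_left_pos[OF Mp])
  also have "\<dots> \<longleftrightarrow> of_int l * pi < of_int (2 * int m1 * int K) * pi" unfolding assms MP ..
  also have "\<dots> \<longleftrightarrow> l < 2 * int m1 * int K"
    by (simp only: mult_less_cancel_right_pos[OF pi_gt_zero] of_int_less_iff)
  finally show ?thesis using 1 by blast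
qed

end

context rose begin

definition Lset :: "int set" where
  "Lset = {l. 0 \<le> l \<and> l < 2 * int m1 * int K \<and> (odd (m1 + m2) \<or> even l) \<and>
              l mod (2 * int m1) \<noteq> 0 \<and> l mod (2 * int m1) \<noteq> int m1}"

definition Gset :: "real set" where
  "Gset = {t. 0 \<le> t \<and> t < rho_period m1 m2 \<and> cos (real m2 * t) \<noteq> 0 \<and>
     (\<exists>s. 0 \<le> s \<and> s < rho_period m1 m2 \<and> s \<noteq> t \<and> cc m1 m2 s = cc m1 m2 t)}"

lemma G_eq: "Gset = (\<lambda>l. of_int l * pi / real (2 * m1 * m2)) ` Lset"
proof (intro equalityI subsetI)
  fix t assume "t \<in> Gset"
  then obtain s where t: "0 \<le> t" "t < rho_period m1 m2" "cos (real m2 * t) \<noteq> 0"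
    and s: "0 \<le> s" "s < rho_period m1 m2" "s \<noteq> t" "cc m1 m2 s = cc m1 m2 t"
    unfolding Gset_def by blast
  obtain a j where aj: "even (a + j)" "real (2 * m1 * m2) * t = of_int (int m1 * a - int m2 * j) * pi"
    using lattice[OF s(1,2) t(1,2) s(3,4) t(3)] by blast
  define l where "l = int m1 * a - int m2 * j"
  have lt: "real (2 * m1 * m2) * t = of_int l * pi" using aj(2) unfolding l_def .
  have sn: "sin (real m2 * t) \<noteq> 0" using not_boundary[OF s(1,2) t(1,2) s(3,4) t(3)] .
  have "l mod (2 * int m1) \<noteq> 0" using lat_sin[OF lt] sn by simp
  moreover have "l mod (2 * int m1) \<noteq> int m1" using lat_cos[OF lt] t(3) by simp
  moreover have "0 \<le> l \<and> l < 2 * int m1 * int K" using lat_range[OF lt] t(1,2) by simp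
  moreover have "odd (m1 + m2) \<or> even l" using good_l1[OF aj(1) l_def] by blast
  ultimately have "l \<in> Lset" unfolding Lset_def by blast
  moreover have "t = of_int l * pi / real (2 * m1 * m2)"
    using lt m1p m2p by (simp add: field_simps)
  ultimately show "t \<in> (\<lambda>l. of_int l * pi / real (2 * m1 * m2)) ` Lset" by blast
next
  fix t assume "t \<in> (\<lambda>l. of_int l * pi / real (2 * m1 * m2)) ` Lset"
  then obtain l where l: "l \<in> Lset" and tl: "t = of_int l * pi / real (2 * m1 * m2)" by blast
  have lt: "real (2 * m1 * m2) * t = of_int l * pi" using tl m1p m2p by simp
  have L: "0 \<le> l" "l < 2 * int m1 * int K" "odd (m1 + m2) \<or> even l"
     "l mod (2 * int m1) \<noteq> 0" "l mod (2 * int m1) \<noteq> int m1"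
    using l unfolding Lset_def by auto
  have r: "0 \<le> t" "t < rho_period m1 m2" using lat_range[OF lt] L(1,2) by auto
  have sn: "sin (real m2 * t) \<noteq> 0" using lat_sin[OF lt] L(4) by simp
  have cs: "cos (real m2 * t) \<noteq> 0" using lat_cos[OF lt] L(5) by simp
  obtain a j where aj: "even (a + j)" "l = int m1 * a - int m2 * j" using good_l2[OF L(3)] by blast
  have "real (2 * m1 * m2) * t = of_int (int m1 * a - int m2 * j) * pi" using lt aj(2) by simp
  from partner_exists[OF r sn aj(1) this] obtain s where
    "0 \<le> s \<and> s < rho_period m1 m2 \<and> s \<noteq> t \<and> cc m1 m2 s = cc m1 m2 t" by blast
  then show "t \<in> Gset" unfolding Gset_def using r cs by blast
qed

lemma card_G: "card Gset = card Lset"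
proof -
  have "inj_on (\<lambda>l. of_int l * pi / real (2 * m1 * m2)) Lset"
    using m1p m2p by (intro inj_onI) (simp add: field_simps)
  then show ?thesis unfolding G_eq by (rule card_image)
qed

lemma finite_L: "finite Lset"
  unfolding Lset_def by (rule finite_subset[of _ "{0..<2 * int m1 * int K}"]) auto

end


lemma divmod_int: fixes b q r :: int assumes "0 < b" "0 \<le> r" "r < b"
  shows "(b * q + r) div b = q \<and> (b * q + r) mod b = r"
proof
  have "(b * q + r) div b = q + r div b" using assms by simp
  then show "(b * q + r) div b = q" using assms by simp
  have "(b * q + r) mod b = r mod b" by simp
  then show "(b * q + r) mod b = r" using assms by simp
qed

lemma decomp_int: fixes b l :: int assumes "0 < b" "0 \<le> l" "l < b * k"
  obtains q r where "l = b * q + r" "0 \<le> q" "q < k" "0 \<le> r" "r < b" "r = l mod b"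
proof -
  define q where "q = l div b"
  define r where "r = l mod b"
  have e: "l = b * q + r" unfolding q_def r_def by simp
  have r: "0 \<le> r" "r < b" unfolding r_def using assms by simp_all
  have q0: "0 \<le> q" unfolding q_def using assms by (simp add: pos_imp_zdiv_nonneg_iff)
  have "b * q \<le> l" using e r by simp
  then have "b * q < b * k" using assms by linarith
  then have "q < k" using assms(1) mult_less_cancel_left_pos by blast
  then show ?thesis using that e r q0 r_def by blast
qed

context rose begin

lemma card_L_odd:
  assumes "odd (m1 + m2)"
  shows "card Lset = 2 * m2 * (2 * m1 - 2)"
proof -
  define b where "b = 2 * int m1"
  have b0: "0 < b" unfolding b_def using m1p by simp
  have K: "int K = 2 * int m2" unfolding K_def using assms by simp
  define A where "A = {0..<2 * int m2} \<times> ({1..<b} - {int m1})"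
  define f where "f = (\<lambda>(q, r). b * q + r)"
  have "Lset = f ` A"
  proof (intro equalityI subsetI)
    fix l assume "l \<in> Lset"
    then have L: "0 \<le> l" "l < b * (2 * int m2)" "l mod b \<noteq> 0" "l mod b \<noteq> int m1"
      unfolding Lset_def b_def K by (auto simp: algebra_simps)
    obtain q r where qr: "l = b * q + r" "0 \<le> q" "q < 2 * int m2" "0 \<le> r" "r < b" "r = l mod b"
      using decomp_int[OF b0 L(1,2)] by blast
    have "(q, r) \<in> A" unfolding A_def using qr L(3,4) by auto
    then show "l \<in> f ` A" unfolding f_def using qr(1) by force
  next
    fix l assume "l \<in> f ` A"
    then obtain x where x: "x \<in> A" "l = f x" by blast
    obtain q r where "x = (q, r)" by force
    then have qr: "l = b * q + r" "0 \<le> q" "q < 2 * int m2" "1 \<le> r" "r < b" "r \<noteq> int m1"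
      using x unfolding A_def f_def by auto
    have md: "l mod b = r" using divmod_int[OF b0, of r q] qr by simp
    have "b * q + r < b * q + b" using qr by simp
    also have "\<dots> = b * (q + 1)" by (simp add: algebra_simps)
    also have "\<dots> \<le> b * (2 * int m2)" using qr(3) b0 by (intro mult_left_mono) auto
    finally have "l < b * (2 * int m2)" using qr(1) by simp
    moreover have "0 \<le> l" using qr b0 by simp
    ultimately show "l \<in> Lset" unfolding Lset_def using md qr assms K b_def
      by (auto simp: algebra_simps)
  qed
  moreover have "inj_on f A"
  proof (rule inj_onI)
    fix x y assume xy: "x \<in> A" "y \<in> A" "f x = f y"
    obtain q r where xq: "x = (q, r)" by force
    obtain q' r' where yq: "y = (q', r')" by force
    have x: "x = (q, r)" "0 \<le> r" "r < b" using xy xq unfolding A_def by auto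
    have y: "y = (q', r')" "0 \<le> r'" "r' < b" using xy yq unfolding A_def by auto
    have e: "b * q + r = b * q' + r'" using xy xq yq unfolding f_def by auto
    have "q = q'" using divmod_int[OF b0 x(2,3), of q] divmod_int[OF b0 y(2,3), of q'] e by simp
    moreover have "r = r'" using divmod_int[OF b0 x(2,3), of q] divmod_int[OF b0 y(2,3), of q'] e by simp
    ultimately show "x = y" using x y by simp
  qed
  ultimately have "card Lset = card A" by (simp add: card_image)
  also have "card A = card {0..<2 * int m2} * card ({1..<b} - {int m1})"
    unfolding A_def by (rule card_cartesian_product)
  also have "card ({1..<b} - {int m1}) = card {1..<b} - 1"
    using m1p b_def by (subst card_Diff_singleton) auto
  also have "card {1..<b} = 2 * m1 - 1" unfolding b_def by simp
  also have "card {0..<2 * int m2} = 2 * m2" by simp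
  finally show ?thesis by (simp add: numeral_2_eq_2)
qed

lemma card_L_even:
  assumes "even (m1 + m2)"
  shows "card Lset = m2 * (m1 - 1)"
proof -
  define b where "b = 2 * int m1"
  have b0: "0 < b" unfolding b_def using m1p by simp
  have K: "int K = int m2" unfolding K_def using assms by simp
  have oo: "odd m1 \<and> odd m2" using assms by (rule both_odd)
  define A where "A = {0..<int m2} \<times> {1..<int m1}"
  define f where "f = (\<lambda>(q, r). b * q + 2 * r)"
  have "Lset = f ` A"
  proof (intro equalityI subsetI)
    fix l assume "l \<in> Lset"
    then have L: "0 \<le> l" "l < b * int m2" "even l" "l mod b \<noteq> 0"
      unfolding Lset_def b_def K using assms by (auto simp: algebra_simps)
    obtain q r where qr: "l = b * q + r" "0 \<le> q" "q < int m2" "0 \<le> r" "r < b" "r = l mod b"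
      using decomp_int[OF b0 L(1,2)] by blast
    have "even r"
    proof -
      have "r = l - 2 * (int m1 * q)" using qr(1) b_def by simp
      then show ?thesis using L(3) by simp
    qed
    then obtain r' where r': "r = 2 * r'" by blast
    have "(q, r') \<in> A" unfolding A_def using qr L(4) r' b_def by auto
    then show "l \<in> f ` A" unfolding f_def using qr(1) r' by force
  next
    fix l assume "l \<in> f ` A"
    then obtain x where x: "x \<in> A" "l = f x" by blast
    obtain q r where "x = (q, r)" by force
    then have qr: "l = b * q + 2 * r" "0 \<le> q" "q < int m2" "1 \<le> r" "r < int m1"
      using x unfolding A_def f_def by auto
    have md: "l mod b = 2 * r" using divmod_int[OF b0, of "2 * r" q] qr b_def by simp
    have "b * q + 2 * r < b * q + b" using qr b_def by simp
    also have "\<dots> = b * (q + 1)" by (simp add: algebra_simps)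
    also have "\<dots> \<le> b * int m2" using qr(3) b0 by (intro mult_left_mono) auto
    finally have "l < b * int m2" using qr(1) by simp
    moreover have "0 \<le> l" using qr b0 by simp
    moreover have "even l" using qr(1) b_def by simp
    moreover have "2 * r \<noteq> int m1" using oo by (metis even_mult_iff even_numeral even_of_nat)
    ultimately show "l \<in> Lset" unfolding Lset_def using md qr K b_def
      by (auto simp: algebra_simps)
  qed
  moreover have "inj_on f A"
  proof (rule inj_onI)
    fix x y assume "x \<in> A" "y \<in> A" "f x = f y"
    then obtain q r q' r' where x: "x = (q, r)" "0 \<le> 2 * r" "2 * r < b" and y: "y = (q', r')" "0 \<le> 2 * r'" "2 * r' < b"
      and e: "b * q + 2 * r = b * q' + 2 * r'"
      unfolding A_def f_def b_def by auto
    have "q = q'" using divmod_int[OF b0 x(2,3), of q] divmod_int[OF b0 y(2,3), of q'] e by simp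
    moreover have "2 * r = 2 * r'" using divmod_int[OF b0 x(2,3), of q] divmod_int[OF b0 y(2,3), of q'] e by simp
    ultimately show "x = y" using x y by simp
  qed
  ultimately have "card Lset = card A" by (simp add: card_image)
  also have "card A = card {0..<int m2} * card {1..<int m1}"
    unfolding A_def by (rule card_cartesian_product)
  also have "card {1..<int m1} = m1 - 1" using m1p by simp
  finally show ?thesis by simp
qed

end

context rose begin

lemma params_eq: "rho_params m1 m2 \<alpha> (rhodonea m1 m2 \<alpha> t) =
   {u. 0 \<le> u \<and> u < rho_period m1 m2 \<and> cc m1 m2 u = cc m1 m2 t}"
  unfolding rho_params_def rho_eq_iff ..

lemma G_props:
  assumes "t \<in> Gset"
  shows "0 \<le> t" "t < rho_period m1 m2" "cos (real m2 * t) \<noteq> 0" "sin (real m2 * t) \<noteq> 0"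
proof -
  obtain s where t: "0 \<le> t" "t < rho_period m1 m2" "cos (real m2 * t) \<noteq> 0"
    and s: "0 \<le> s" "s < rho_period m1 m2" "s \<noteq> t" "cc m1 m2 s = cc m1 m2 t"
    using assms unfolding Gset_def by blast
  show "0 \<le> t" "t < rho_period m1 m2" "cos (real m2 * t) \<noteq> 0" using t by auto
  show "sin (real m2 * t) \<noteq> 0" using not_boundary[OF s(1,2) t(1,2) s(3,4) t(3)] .
qed

lemma cos_nz_transfer:
  assumes "cc m1 m2 s = cc m1 m2 t" "cos (real m2 * t) \<noteq> 0"
  shows "cos (real m2 * s) \<noteq> 0"
  using assms rho_eq_iff[of m1 m2 0 s t, symmetric] rho_zero_iff[of m1 m2 0] by metis

lemma fiber_G:
  assumes "t \<in> Gset"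
  shows "\<exists>s. s \<noteq> t \<and> s \<in> Gset \<and> rho_params m1 m2 \<alpha> (rhodonea m1 m2 \<alpha> t) = {t, s}"
proof -
  obtain s where t: "0 \<le> t" "t < rho_period m1 m2" "cos (real m2 * t) \<noteq> 0"
    and s: "0 \<le> s" "s < rho_period m1 m2" "s \<noteq> t" "cc m1 m2 s = cc m1 m2 t"
    using assms unfolding Gset_def by blast
  have "rho_params m1 m2 \<alpha> (rhodonea m1 m2 \<alpha> t) = {t, s}"
  proof (intro equalityI subsetI)
    fix u assume "u \<in> rho_params m1 m2 \<alpha> (rhodonea m1 m2 \<alpha> t)"
    then have u: "0 \<le> u" "u < rho_period m1 m2" "cc m1 m2 u = cc m1 m2 t" unfolding params_eq by auto
    show "u \<in> {t, s}"
    proof (cases "u = t")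
      case False
      have "u = s" using partner_unique[OF u(1,2) s(1,2) t(1,2) False s(3) u(3) s(4) t(3)] .
      then show ?thesis by simp
    qed simp
  next
    fix u assume "u \<in> {t, s}"
    then show "u \<in> rho_params m1 m2 \<alpha> (rhodonea m1 m2 \<alpha> t)" unfolding params_eq using t s by auto
  qed
  moreover have "s \<in> Gset"
  proof -
    have "cos (real m2 * s) \<noteq> 0" using cos_nz_transfer[OF s(4) t(3)] .
    moreover have "t \<noteq> s" "cc m1 m2 t = cc m1 m2 s" using s by auto
    ultimately show ?thesis unfolding Gset_def using s t by blast
  qed
  ultimately show ?thesis using s(3) by blast
qed

lemma ODP_eq: "{x. ordinary_double_point m1 m2 \<alpha> x \<and> x \<noteq> (0,0)} = rhodonea m1 m2 \<alpha> ` Gset"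
proof (intro equalityI subsetI)
  fix x assume "x \<in> {x. ordinary_double_point m1 m2 \<alpha> x \<and> x \<noteq> (0,0)}"
  then have c2: "card (rho_params m1 m2 \<alpha> x) = 2" and x0: "x \<noteq> (0,0)"
    unfolding ordinary_double_point_def traversed_def by auto
  then obtain t s where ts: "rho_params m1 m2 \<alpha> x = {t, s}" "t \<noteq> s" by (meson card_2_iff)
  then have t: "0 \<le> t" "t < rho_period m1 m2" "rhodonea m1 m2 \<alpha> t = x"
    and s: "0 \<le> s" "s < rho_period m1 m2" "rhodonea m1 m2 \<alpha> s = x"
    unfolding rho_params_def by blast+
  have "cos (real m2 * t) \<noteq> 0" using t(3) x0 rho_zero_iff by metis
  moreover have "cc m1 m2 s = cc m1 m2 t" using s(3) t(3) rho_eq_iff by metis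
  ultimately have "t \<in> Gset" unfolding Gset_def using t s ts(2) by blast
  then show "x \<in> rhodonea m1 m2 \<alpha> ` Gset" using t(3) by blast
next
  fix x assume "x \<in> rhodonea m1 m2 \<alpha> ` Gset"
  then obtain t where t: "t \<in> Gset" "x = rhodonea m1 m2 \<alpha> t" by blast
  obtain s where s: "s \<noteq> t" "rho_params m1 m2 \<alpha> x = {t, s}" using fiber_G[OF t(1)] t(2) by blast
  have "x \<noteq> (0,0)" using G_props(3)[OF t(1)] t(2) rho_zero_iff by metis
  moreover have "ordinary_double_point m1 m2 \<alpha> x"
    unfolding ordinary_double_point_def traversed_def s(2) using s(1) by auto
  ultimately show "x \<in> {x. ordinary_double_point m1 m2 \<alpha> x \<and> x \<noteq> (0,0)}" by blast
qed

lemma finite_G: "finite Gset"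
  unfolding G_eq using finite_L by simp

lemma card_two: "card Gset = 2 * card (rhodonea m1 m2 \<alpha> ` Gset)"
proof -
  let ?f = "rhodonea m1 m2 \<alpha>"
  have "\<forall>j\<in>?f ` Gset. card {i\<in>Gset. ?f i = j} = 2"
  proof
    fix j assume "j \<in> ?f ` Gset"
    then obtain t where t: "t \<in> Gset" "j = ?f t" by blast
    obtain s where s: "s \<noteq> t" "s \<in> Gset" "rho_params m1 m2 \<alpha> (?f t) = {t, s}" using fiber_G[OF t(1)] by blast
    have "{i\<in>Gset. ?f i = j} = rho_params m1 m2 \<alpha> j"
    proof (intro equalityI subsetI)
      fix i assume "i \<in> {i\<in>Gset. ?f i = j}"
      then show "i \<in> rho_params m1 m2 \<alpha> j" unfolding rho_params_def using G_props by blast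
    next
      fix i assume "i \<in> rho_params m1 m2 \<alpha> j"
      then have "i = t \<or> i = s" using s(3) t(2) by auto
      moreover have "?f i = j" using \<open>i \<in> rho_params m1 m2 \<alpha> j\<close> unfolding rho_params_def by blast
      ultimately show "i \<in> {i\<in>Gset. ?f i = j}" using t(1) s(2) by blast
    qed
    then show "card {i\<in>Gset. ?f i = j} = 2" using s t by simp
  qed
  then have "sum (\<lambda>i. card {j\<in>?f ` Gset. ?f i = j}) Gset = 2 * card (?f ` Gset)"
    using finite_G by (intro sum_multicount) auto
  moreover have "sum (\<lambda>i. card {j\<in>?f ` Gset. ?f i = j}) Gset = sum (\<lambda>i. 1) Gset"
  proof (rule sum.cong)
    fix i assume "i \<in> Gset"
    then have "{j\<in>?f ` Gset. ?f i = j} = {?f i}" by auto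
    then show "card {j\<in>?f ` Gset. ?f i = j} = 1" by simp
  qed simp
  ultimately show ?thesis by simp
qed

lemma G_not_boundary: "t \<in> Gset \<Longrightarrow> rhodonea m1 m2 \<alpha> t \<notin> boundary_points m1 m2 \<alpha>"
proof
  assume t: "t \<in> Gset" and b: "rhodonea m1 m2 \<alpha> t \<in> boundary_points m1 m2 \<alpha>"
  then have "\<bar>cos (real m2 * t)\<bar> = 1" unfolding boundary_points_def using norm_rho[of m1 m2 \<alpha> t] by simp
  then have "(cos (real m2 * t))\<^sup>2 = 1" by (simp only: abs_square_eq_1)
  then have "(sin (real m2 * t))\<^sup>2 = 0" using sin_cos_squared_add[of "real m2 * t"] by linarith
  then show False using G_props(4)[OF t] by simp
qed

lemma selfint_sub: "self_intersection m1 m2 \<alpha> x \<Longrightarrow> x = (0,0) \<or> x \<in> rhodonea m1 m2 \<alpha> ` Gset"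
proof -
  assume "self_intersection m1 m2 \<alpha> x"
  then obtain s t where st: "s \<in> rho_params m1 m2 \<alpha> x" "t \<in> rho_params m1 m2 \<alpha> x" "s \<noteq> t"
    unfolding self_intersection_def by blast
  then have t: "0 \<le> t" "t < rho_period m1 m2" "rhodonea m1 m2 \<alpha> t = x"
    and s: "0 \<le> s" "s < rho_period m1 m2" "rhodonea m1 m2 \<alpha> s = x"
    unfolding rho_params_def by blast+
  show ?thesis
  proof (cases "x = (0,0)")
    case False
    have "cos (real m2 * t) \<noteq> 0" using t(3) False rho_zero_iff by metis
    moreover have "cc m1 m2 s = cc m1 m2 t" using s(3) t(3) rho_eq_iff by metis
    ultimately have "t \<in> Gset" unfolding Gset_def using t s st(3) by blast
    then show ?thesis using t(3) by blast
  qed simp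
qed

lemma G_selfint: "t \<in> Gset \<Longrightarrow> self_intersection m1 m2 \<alpha> (rhodonea m1 m2 \<alpha> t)"
  using fiber_G[of t \<alpha>] unfolding self_intersection_def by blast

lemma zero_selfint: "K \<ge> 2 \<Longrightarrow> self_intersection m1 m2 \<alpha> (0,0)"
proof -
  assume K2: "K \<ge> 2"
  have tr: "rho_params m1 m2 \<alpha> (0,0) = (\<lambda>k. real (2 * k + 1) * pi / real (2 * m2)) ` {0..<K}"
    unfolding rho_params_def rho_zero_iff zero_params[symmetric] by simp
  let ?s = "real (2 * 0 + 1) * pi / real (2 * m2)" and ?t = "real (2 * 1 + 1) * pi / real (2 * m2)"
  have "?s \<in> rho_params m1 m2 \<alpha> (0,0)" "?t \<in> rho_params m1 m2 \<alpha> (0,0)"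
    unfolding tr using K2 by (auto intro!: imageI)
  moreover have "?s \<noteq> ?t" using m2p by (simp add: field_simps)
  ultimately show ?thesis unfolding self_intersection_def by blast
qed

end

context rose begin

lemma LS_eq:
  assumes odd: "odd (m1 + m2)"
  shows "LS m1 m2 \<alpha> = {(0,0)} \<union> rhodonea m1 m2 \<alpha> ` Gset \<union> boundary_points m1 m2 \<alpha>"
proof (intro equalityI subsetI)
  have K: "K = 2 * m2" unfolding K_def using odd by simp
  fix x assume "x \<in> LS m1 m2 \<alpha>"
  then obtain l where l: "l < 4 * m1 * m2" and x: "x = rhodonea m1 m2 \<alpha> (real l * pi / (2 * real m1 * real m2))"
    unfolding LS_def by auto
  define t where "t = real l * pi / (2 * real m1 * real m2)"
  have lt: "real (2 * m1 * m2) * t = of_int (int l) * pi" unfolding t_def using m1p m2p by simp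
  show "x \<in> {(0,0)} \<union> rhodonea m1 m2 \<alpha> ` Gset \<union> boundary_points m1 m2 \<alpha>"
  proof (cases "int l mod (2 * int m1) = 0")
    case True
    then have "sin (real m2 * t) = 0" using lat_sin[OF lt] by simp
    then have "(cos (real m2 * t))\<^sup>2 = 1" using sin_cos_squared_add[of "real m2 * t"] by simp
    then have "\<bar>cos (real m2 * t)\<bar> = 1" by (simp only: abs_square_eq_1)
    then have "x \<in> boundary_points m1 m2 \<alpha>" unfolding boundary_points_def x t_def[symmetric]
      using norm_rho[of m1 m2 \<alpha> t] by simp
    then show ?thesis by blast
  next
    case F1: False
    show ?thesis
    proof (cases "int l mod (2 * int m1) = int m1")
      case True
      then have "cos (real m2 * t) = 0" using lat_cos[OF lt] by simp
      then have "x = (0,0)" unfolding x t_def[symmetric] rho_zero_iff .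
      then show ?thesis by blast
    next
      case False
      have "l < 2 * m1 * K" using l unfolding K by (simp add: algebra_simps)
      then have "int l < int (2 * m1 * K)" by (simp only: of_nat_less_iff)
      then have "int l < 2 * int m1 * int K" by simp
      then have "int l \<in> Lset" unfolding Lset_def using F1 False odd by simp
      then have "of_int (int l) * pi / real (2 * m1 * m2) \<in> Gset" unfolding G_eq by blast
      moreover have "of_int (int l) * pi / real (2 * m1 * m2) = t" unfolding t_def by simp
      ultimately have "t \<in> Gset" by simp
      moreover have "x = rhodonea m1 m2 \<alpha> t" unfolding x t_def ..
      ultimately show ?thesis by blast
    qed
  qed
next
  have K: "K = 2 * m2" unfolding K_def using odd by simp
  fix x assume "x \<in> {(0,0)} \<union> rhodonea m1 m2 \<alpha> ` Gset \<union> boundary_points m1 m2 \<alpha>"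
  then consider "x = (0,0)" | "x \<in> rhodonea m1 m2 \<alpha> ` Gset" | "x \<in> boundary_points m1 m2 \<alpha>" by blast
  then show "x \<in> LS m1 m2 \<alpha>"
  proof cases
    case 1
    define t where "t = real m1 * pi / (2 * real m1 * real m2)"
    have lt: "real (2 * m1 * m2) * t = of_int (int m1) * pi" unfolding t_def using m1p m2p by simp
    have "int m1 mod (2 * int m1) = int m1" using m1p by simp
    then have "cos (real m2 * t) = 0" using lat_cos[OF lt] by simp
    then have "x = rhodonea m1 m2 \<alpha> t" using 1 rho_zero_iff by metis
    moreover have "m1 < 4 * m1 * m2" using m1p m2p by simp
    ultimately show ?thesis unfolding LS_def t_def by (intro image_eqI[where x = m1]) auto
  next
    case 2
    then obtain t where t: "t \<in> Gset" "x = rhodonea m1 m2 \<alpha> t" by blast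
    then obtain l where l: "l \<in> Lset" "t = of_int l * pi / real (2 * m1 * m2)" unfolding G_eq by blast
    have l0: "0 \<le> l" "l < 2 * int m1 * int K" using l(1) unfolding Lset_def by auto
    have "nat l < 4 * m1 * m2" using l0 unfolding K by (simp add: nat_less_iff)
    moreover have "t = real (nat l) * pi / (2 * real m1 * real m2)" using l(2) l0 by simp
    ultimately show ?thesis unfolding LS_def using t(2) by (intro image_eqI[where x = "nat l"]) auto
  next
    case 3
    then obtain k where k: "k < K" "x = rhodonea m1 m2 \<alpha> (real k * pi / real m2)"
      unfolding boundary_eq by auto
    have "2 * m1 * k < 4 * m1 * m2" using k(1) m1p unfolding K by simp
    moreover have "real k * pi / real m2 = real (2 * m1 * k) * pi / (2 * real m1 * real m2)"
      using m1p by simp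
    ultimately show ?thesis unfolding LS_def using k(2) by (intro image_eqI[where x = "2 * m1 * k"]) auto
  qed
qed

end

theorem corollary2p2:
  fixes m1 m2 :: nat and \<alpha> :: real
  assumes "m1 > 0" and "m2 > 0" and "coprime m1 m2"
  shows "(odd (m1 + m2) \<longrightarrow>
            LS m1 m2 \<alpha> = {x. self_intersection m1 m2 \<alpha> x} \<union> boundary_points m1 m2 \<alpha>
          \<and> finite (LS m1 m2 \<alpha>) \<and> card (LS m1 m2 \<alpha>) = 2 * m1 * m2 + 1
          \<and> LS m1 m2 \<alpha> = {(0,0)} \<union> {x. ordinary_double_point m1 m2 \<alpha> x \<and> x \<noteq> (0,0)}
                              \<union> boundary_points m1 m2 \<alpha>
          \<and> traversed m1 m2 \<alpha> (0,0) (2 * m2)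
          \<and> finite {x. ordinary_double_point m1 m2 \<alpha> x \<and> x \<noteq> (0,0)}
          \<and> card {x. ordinary_double_point m1 m2 \<alpha> x \<and> x \<noteq> (0,0)} = 2 * (m1 - 1) * m2
          \<and> finite (boundary_points m1 m2 \<alpha>) \<and> card (boundary_points m1 m2 \<alpha>) = 2 * m2)
       \<and> (even (m1 + m2) \<longrightarrow>
            finite {x. ordinary_double_point m1 m2 \<alpha> x \<and> x \<noteq> (0,0)}
          \<and> real (card {x. ordinary_double_point m1 m2 \<alpha> x \<and> x \<noteq> (0,0)})
              = (real m1 - 1) * real m2 / 2
          \<and> finite (boundary_points m1 m2 \<alpha>) \<and> card (boundary_points m1 m2 \<alpha>) = m2
          \<and> traversed m1 m2 \<alpha> (0,0) m2)"
proof -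
  interpret rose m1 m2 using assms by unfold_locales
  let ?G = "rhodonea m1 m2 \<alpha> ` Gset"
  let ?B = "boundary_points m1 m2 \<alpha>"
  have ODP: "{x. ordinary_double_point m1 m2 \<alpha> x \<and> x \<noteq> (0,0)} = ?G" by (rule ODP_eq)
  have finG: "finite ?G" using finite_G by simp
  have c2: "card Gset = 2 * card ?G" by (rule card_two)
  have cB: "finite ?B \<and> card ?B = K" by (rule card_boundary)
  have odd_part: "odd (m1 + m2) \<longrightarrow>
            LS m1 m2 \<alpha> = {x. self_intersection m1 m2 \<alpha> x} \<union> boundary_points m1 m2 \<alpha>
          \<and> finite (LS m1 m2 \<alpha>) \<and> card (LS m1 m2 \<alpha>) = 2 * m1 * m2 + 1
          \<and> LS m1 m2 \<alpha> = {(0,0)} \<union> {x. ordinary_double_point m1 m2 \<alpha> x \<and> x \<noteq> (0,0)}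
                              \<union> boundary_points m1 m2 \<alpha>
          \<and> traversed m1 m2 \<alpha> (0,0) (2 * m2)
          \<and> finite {x. ordinary_double_point m1 m2 \<alpha> x \<and> x \<noteq> (0,0)}
          \<and> card {x. ordinary_double_point m1 m2 \<alpha> x \<and> x \<noteq> (0,0)} = 2 * (m1 - 1) * m2
          \<and> finite (boundary_points m1 m2 \<alpha>) \<and> card (boundary_points m1 m2 \<alpha>) = 2 * m2"
  proof
    assume odd: "odd (m1 + m2)"
    have K: "K = 2 * m2" unfolding K_def using odd by simp
    have LSe: "LS m1 m2 \<alpha> = {(0,0)} \<union> ?G \<union> ?B" by (rule LS_eq[OF odd])
    have SI: "{x. self_intersection m1 m2 \<alpha> x} \<union> ?B = {(0,0)} \<union> ?G \<union> ?B"
    proof -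
      have "{x. self_intersection m1 m2 \<alpha> x} = {(0,0)} \<union> ?G"
      proof (intro equalityI subsetI)
        fix x assume "x \<in> {x. self_intersection m1 m2 \<alpha> x}"
        then show "x \<in> {(0,0)} \<union> ?G" using selfint_sub by blast
      next
        fix x assume "x \<in> {(0,0)} \<union> ?G"
        moreover have "K \<ge> 2" unfolding K using m2p by simp
        ultimately show "x \<in> {x. self_intersection m1 m2 \<alpha> x}"
          using zero_selfint G_selfint by blast
      qed
      then show ?thesis by simp
    qed
    have cG: "card ?G = 2 * (m1 - 1) * m2"
    proof -
      have "2 * card ?G = 2 * m2 * (2 * m1 - 2)" using c2 card_G card_L_odd[OF odd] by simp
      then show ?thesis by (simp add: algebra_simps right_diff_distrib')
    qed
    have d1: "{(0,0)} \<inter> ?G = {}" using G_props(3) rho_zero_iff by fastforce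
    have d2: "({(0,0)} \<union> ?G) \<inter> ?B = {}"
    proof -
      have "(0,0) \<notin> ?B" unfolding boundary_points_def by simp
      then show ?thesis using G_not_boundary by blast
    qed
    have cLS: "card ({(0,0)} \<union> ?G \<union> ?B) = 1 + card ?G + card ?B"
      using card_Un_disjoint[OF _ _ d2] card_Un_disjoint[OF _ _ d1] finG cB by simp
    obtain k where k: "m1 = Suc k" using m1p by (cases m1) auto
    have "card (LS m1 m2 \<alpha>) = 2 * m1 * m2 + 1"
      unfolding LSe cLS cG using cB K unfolding k by (simp add: algebra_simps)
    moreover have "finite (LS m1 m2 \<alpha>)" unfolding LSe using finG cB by simp
    moreover have "traversed m1 m2 \<alpha> (0,0) (2 * m2)" using traversed_zero K by simp
    ultimately show "LS m1 m2 \<alpha> = {x. self_intersection m1 m2 \<alpha> x} \<union> boundary_points m1 m2 \<alpha>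
          \<and> finite (LS m1 m2 \<alpha>) \<and> card (LS m1 m2 \<alpha>) = 2 * m1 * m2 + 1
          \<and> LS m1 m2 \<alpha> = {(0,0)} \<union> {x. ordinary_double_point m1 m2 \<alpha> x \<and> x \<noteq> (0,0)}
                              \<union> boundary_points m1 m2 \<alpha>
          \<and> traversed m1 m2 \<alpha> (0,0) (2 * m2)
          \<and> finite {x. ordinary_double_point m1 m2 \<alpha> x \<and> x \<noteq> (0,0)}
          \<and> card {x. ordinary_double_point m1 m2 \<alpha> x \<and> x \<noteq> (0,0)} = 2 * (m1 - 1) * m2
          \<and> finite (boundary_points m1 m2 \<alpha>) \<and> card (boundary_points m1 m2 \<alpha>) = 2 * m2"
      using LSe SI ODP cG finG cB K by simp
  qed
  have even_part: "even (m1 + m2) \<longrightarrow>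
            finite {x. ordinary_double_point m1 m2 \<alpha> x \<and> x \<noteq> (0,0)}
          \<and> real (card {x. ordinary_double_point m1 m2 \<alpha> x \<and> x \<noteq> (0,0)})
              = (real m1 - 1) * real m2 / 2
          \<and> finite (boundary_points m1 m2 \<alpha>) \<and> card (boundary_points m1 m2 \<alpha>) = m2
          \<and> traversed m1 m2 \<alpha> (0,0) m2"
  proof
    assume ev: "even (m1 + m2)"
    have K: "K = m2" unfolding K_def using ev by simp
    have "2 * card ?G = m2 * (m1 - 1)" using c2 card_G card_L_even[OF ev] by simp
    then have "real (2 * card ?G) = real (m2 * (m1 - 1))" by simp
    then have "2 * real (card ?G) = real m2 * (real m1 - 1)" using m1p by (simp add: of_nat_diff)
    then have cG: "real (card ?G) = (real m1 - 1) * real m2 / 2" by (simp add: field_simps)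
    show "finite {x. ordinary_double_point m1 m2 \<alpha> x \<and> x \<noteq> (0,0)}
          \<and> real (card {x. ordinary_double_point m1 m2 \<alpha> x \<and> x \<noteq> (0,0)})
              = (real m1 - 1) * real m2 / 2
          \<and> finite (boundary_points m1 m2 \<alpha>) \<and> card (boundary_points m1 m2 \<alpha>) = m2
          \<and> traversed m1 m2 \<alpha> (0,0) m2"
      using ODP finG cG cB K traversed_zero by simp
  qed
  show ?thesis using odd_part even_part by blast
qed


end
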